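(* Let $M$ be a $0/1$-matrix, let $B$ be a block of $M$, and let $i,j$ be two entries of the input boundary $B^-$ with $j>i$ in the input-boundary order, each of which reaches at least one entry of the output boundary $B^+$. Then $\sigma_A(j)\ge\sigma_A(i)$ and $\sigma_Z(j)\ge\sigma_Z(i)$ (in the output-boundary order).
   Context: Let $M$ be an $m\times n$ $0/1$-matrix with entries indexed $(r,s)$ (rows increasing from bottom to top, columns from left to right). A path from $(k,l)$ to $(i,j)$ is a sequence of $1$-entries starting at $(k,l)$ and ending at $(i,j)$ in which each step goes from $(r,s)$ to $(r+1,s)$, $(r,s+1)$ or $(r+1,s+1)$; $(i,j)$ is reachable from $(k,l)$ if such a path exists. A block $B$ is the submatrix formed by rows $r^-\le r\le r^+$ and columns $s^-\le s\le s^+$. Its input boundary $B^-$ consists of the entries in row $r^-$ or column $s^-$ of $B$, ordered: first row $r^-$ from column $s^+$ down to $s^-$, then the remaining entries of column $s^-$ from row $r^-+1$ up to $r^+$. Its output boundary $B^+$ consists of the entries in row $r^+$ or column $s^+$ of $B$, ordered: first column $s^+$ from row $r^-$ up to $r^+$, then the remaining entries of row $r^+$ from column $s^+-1$ down to $s^-$. For an entry $i\in B^-$, $\sigma_A(i)$ and $\sigma_Z(i)$ denote the first and the last entry of $B^+$ (in the output-boundary order) that is reachable from $i$. *)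

theory Defs
  imports Main
begin

text \<open>An m x n 0/1-matrix is a function M :: nat => nat => nat, entry (r,s) with
  0 <= r < m (rows, bottom to top) and 0 <= s < n (columns, left to right).
  Entries are pairs (r,s).\<close>

definition zero_one_matrix :: "nat \<Rightarrow> nat \<Rightarrow> (nat \<Rightarrow> nat \<Rightarrow> nat) \<Rightarrow> bool" where
  "zero_one_matrix m n M \<longleftrightarrow> (\<forall>r<m. \<forall>s<n. M r s \<in> {0, 1})"

definition one_entry :: "nat \<Rightarrow> nat \<Rightarrow> (nat \<Rightarrow> nat \<Rightarrow> nat) \<Rightarrow> nat \<times> nat \<Rightarrow> bool" where
  "one_entry m n M e \<longleftrightarrow> fst e < m \<and> snd e < n \<and> M (fst e) (snd e) = 1"

definition path_step :: "nat \<times> nat \<Rightarrow> nat \<times> nat \<Rightarrow> bool" where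
  "path_step a b \<longleftrightarrow> b = (fst a + 1, snd a) \<or> b = (fst a, snd a + 1) \<or> b = (fst a + 1, snd a + 1)"

definition is_path :: "nat \<Rightarrow> nat \<Rightarrow> (nat \<Rightarrow> nat \<Rightarrow> nat) \<Rightarrow> (nat \<times> nat) list \<Rightarrow> bool" where
  "is_path m n M p \<longleftrightarrow> p \<noteq> [] \<and> (\<forall>e\<in>set p. one_entry m n M e)
     \<and> (\<forall>k. Suc k < length p \<longrightarrow> path_step (p ! k) (p ! Suc k))"

definition reachable :: "nat \<Rightarrow> nat \<Rightarrow> (nat \<Rightarrow> nat \<Rightarrow> nat) \<Rightarrow> nat \<times> nat \<Rightarrow> nat \<times> nat \<Rightarrow> bool" where
  "reachable m n M a b \<longleftrightarrow> (\<exists>p. is_path m n M p \<and> hd p = a \<and> last p = b)"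

definition in_boundary :: "nat \<Rightarrow> nat \<Rightarrow> nat \<Rightarrow> nat \<Rightarrow> (nat \<times> nat) list" where
  "in_boundary rl rh sl sh =
     map (\<lambda>s. (rl, s)) (rev [sl..<Suc sh]) @ map (\<lambda>r. (r, sl)) [Suc rl..<Suc rh]"

definition out_boundary :: "nat \<Rightarrow> nat \<Rightarrow> nat \<Rightarrow> nat \<Rightarrow> (nat \<times> nat) list" where
  "out_boundary rl rh sl sh =
     map (\<lambda>r. (r, sh)) [rl..<Suc rh] @ map (\<lambda>s. (rh, s)) (rev [sl..<sh])"

definition sigmaA :: "nat \<Rightarrow> nat \<Rightarrow> (nat \<Rightarrow> nat \<Rightarrow> nat) \<Rightarrow> nat \<Rightarrow> nat \<Rightarrow> nat \<Rightarrow> nat \<Rightarrow> nat \<times> nat \<Rightarrow> nat" where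
  "sigmaA m n M rl rh sl sh e =
     (LEAST q. q < length (out_boundary rl rh sl sh) \<and> reachable m n M e (out_boundary rl rh sl sh ! q))"

definition sigmaZ :: "nat \<Rightarrow> nat \<Rightarrow> (nat \<Rightarrow> nat \<Rightarrow> nat) \<Rightarrow> nat \<Rightarrow> nat \<Rightarrow> nat \<Rightarrow> nat \<Rightarrow> nat \<times> nat \<Rightarrow> nat" where
  "sigmaZ m n M rl rh sl sh e =
     (GREATEST q. q < length (out_boundary rl rh sl sh) \<and> reachable m n M e (out_boundary rl rh sl sh ! q))"

end

theory Submission imports Defs begin
fun steps :: "(nat \<times> nat) list \<Rightarrow> bool" where
  "steps (a#b#xs) = (path_step a b \<and> steps (b#xs))"
| "steps _ = True"

lemma steps_nth: "steps p \<longleftrightarrow> (\<forall>k. Suc k < length p \<longrightarrow> path_step (p!k) (p!Suc k))"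
proof (induction p rule: steps.induct)
  case (1 a b xs)
  show ?case
  proof
    assume "steps (a#b#xs)"
    thus "\<forall>k. Suc k < length (a#b#xs) \<longrightarrow> path_step ((a#b#xs)!k) ((a#b#xs)!Suc k)"
      using 1 by (auto simp: nth_Cons split: nat.splits)
  next
    assume H: "\<forall>k. Suc k < length (a#b#xs) \<longrightarrow> path_step ((a#b#xs)!k) ((a#b#xs)!Suc k)"
    have "path_step a b" using H[rule_format, of 0] by simp
    moreover have "\<forall>k. Suc k < length (b#xs) \<longrightarrow> path_step ((b#xs)!k) ((b#xs)!Suc k)"
      using H by (metis Suc_less_eq length_Cons nth_Cons_Suc)
    ultimately show "steps (a#b#xs)" using 1 by simp
  qed
qed auto

lemma steps_ge: "steps (x#xs) \<Longrightarrow> q \<in> set (x#xs) \<Longrightarrow> fst x \<le> fst q \<and> snd x \<le> snd q"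
proof (induction xs arbitrary: x)
  case Nil then show ?case by simp
next
  case (Cons y ys)
  then have ps: "path_step x y" "steps (y#ys)" by auto
  show ?case
  proof (cases "q = x")
    case False
    then have "q \<in> set (y#ys)" using Cons.prems by simp
    then have "fst y \<le> fst q \<and> snd y \<le> snd q" using Cons.IH ps(2) by blast
    then show ?thesis using ps(1) by (auto simp: path_step_def)
  qed simp
qed

lemma steps_le_last: "steps xs \<Longrightarrow> q \<in> set xs \<Longrightarrow> fst q \<le> fst (last xs) \<and> snd q \<le> snd (last xs)"
proof (induction xs arbitrary: q rule: steps.induct)
  case (1 a b xs)
  have ps: "path_step a b" "steps (b#xs)" using 1 by auto
  have "\<And>q'. q' \<in> set (b#xs) \<Longrightarrow> fst q' \<le> fst (last (b#xs)) \<and> snd q' \<le> snd (last (b#xs))"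
    using 1(1) ps(2) by blast
  then have "fst b \<le> fst (last (b#xs)) \<and> snd b \<le> snd (last (b#xs))"
    "q \<noteq> a \<Longrightarrow> fst q \<le> fst (last (b#xs)) \<and> snd q \<le> snd (last (b#xs))" using 1(3) by auto
  then show ?case using ps(1) by (cases "q = a") (auto simp: path_step_def)
qed auto

definition UL :: "(nat \<times> nat) list \<Rightarrow> nat \<times> nat \<Rightarrow> bool" where
  "UL Q v \<longleftrightarrow> (\<exists>q\<in>set Q. fst q \<le> fst v \<and> snd v \<le> snd q)"
definition LR :: "(nat \<times> nat) list \<Rightarrow> nat \<times> nat \<Rightarrow> bool" where
  "LR Q v \<longleftrightarrow> (\<exists>q\<in>set Q. fst v \<le> fst q \<and> snd q \<le> snd v)"

lemma meet: "steps Q \<Longrightarrow> UL Q v \<Longrightarrow> LR Q w \<Longrightarrow> path_step v w \<or> v = w \<Longrightarrow> v \<in> set Q \<or> w \<in> set Q"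
proof (induction Q rule: steps.induct)
  case (1 x y xs)
  have st: "path_step x y" "steps (y#xs)" using 1 by auto
  have ge: "\<And>q. q \<in> set (y#xs) \<Longrightarrow> fst y \<le> fst q \<and> snd y \<le> snd q" using steps_ge st(2) by blast
  obtain q2 where q2: "q2 \<in> set (x#y#xs)" "fst q2 \<le> fst v" "snd v \<le> snd q2" using 1(3) unfolding UL_def by blast
  obtain q1 where q1: "q1 \<in> set (x#y#xs)" "fst w \<le> fst q1" "snd q1 \<le> snd w" using 1(4) unfolding LR_def by blast
  show ?case
  proof (cases "q2 = x")
    case True
    show ?thesis
    proof (cases "q1 = x")
      case True
      with `q2 = x` q1 q2 1(5) show ?thesis
        by (cases v; cases w; cases x) (auto simp: path_step_def)
    next
      case False
      then have q1t: "q1 \<in> set (y#xs)" using q1 by simp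
      show ?thesis
      proof (cases "fst y \<le> fst v")
        case True
        then have "UL (y#xs) v" using q2 `q2 = x` st(1) by (auto simp: UL_def path_step_def)
        moreover have "LR (y#xs) w" using q1t q1 by (auto simp: LR_def)
        ultimately show ?thesis using 1 st by auto
      next
        case False
        have "fst y \<le> fst q1 \<and> snd y \<le> snd q1" using ge q1t by blast
        with False `q2 = x` q1 q2 1(5) st(1) have "v = x \<or> w = x \<or> w = y"
          by (cases v; cases w; cases x; cases y) (auto simp: path_step_def)
        then show ?thesis by auto
      qed
    qed
  next
    case False
    then have q2t: "q2 \<in> set (y#xs)" using q2 by simp
    show ?thesis
    proof (cases "q1 = x")
      case False
      then have "q1 \<in> set (y#xs)" using q1 by simp
      then have "UL (y#xs) v" "LR (y#xs) w" using q1 q2 q2t by (auto simp: UL_def LR_def)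
      then show ?thesis using 1 st by auto
    next
      case True
      show ?thesis
      proof (cases "snd x < snd v")
        case True
        then have "LR (y#xs) w" using `q1 = x` q1 st(1) 1(5) by (auto simp: LR_def path_step_def)
        moreover have "UL (y#xs) v" using q2t q2 by (auto simp: UL_def)
        ultimately show ?thesis using 1 st by auto
      next
        case False
        have "fst y \<le> fst q2 \<and> snd y \<le> snd q2" using ge q2t by blast
        with False `q1 = x` q1 q2 1(5) st(1) have "v = x \<or> w = x"
          by (cases v; cases w; cases x; cases y) (auto simp: path_step_def)
        then show ?thesis by auto
      qed
    qed
  qed
next
  case ("2_1") then show ?case by (simp add: UL_def)
next
  case ("2_2" x)
  then show ?case by (cases v; cases w; cases x) (auto simp: UL_def LR_def path_step_def)
qed

lemma dich: "steps Q \<Longrightarrow> Q \<noteq> [] \<Longrightarrow> fst (last Q) = rh \<or> snd (last Q) = sh \<Longrightarrow> UL Q v \<Longrightarrow>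
   path_step v w \<Longrightarrow> fst w \<le> rh \<Longrightarrow> snd w \<le> sh \<Longrightarrow> UL Q w \<or> LR Q w"
proof (induction Q rule: steps.induct)
  case (1 x y xs)
  have st: "path_step x y" "steps (y#xs)" using 1 by auto
  obtain q where q: "q \<in> set (x#y#xs)" "fst q \<le> fst v" "snd v \<le> snd q" using 1(5) unfolding UL_def by blast
  show ?case
  proof (cases "q = x")
    case False
    then have "UL (y#xs) v" using q by (auto simp: UL_def)
    then have "UL (y#xs) w \<or> LR (y#xs) w" using 1 st by auto
    then show ?thesis by (auto simp: UL_def LR_def)
  next
    case True
    show ?thesis
    proof (cases "fst y \<le> fst v")
      case True
      then have "UL (y#xs) v" using q `q = x` st(1) by (auto simp: UL_def path_step_def)
      then have "UL (y#xs) w \<or> LR (y#xs) w" using 1 st by auto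
      then show ?thesis by (auto simp: UL_def LR_def)
    next
      case False
      have "(fst x \<le> fst w \<and> snd w \<le> snd x) \<or> (fst w \<le> fst y \<and> snd y \<le> snd w)"
        using False `q = x` q 1(6) st(1) by (cases v; cases w; cases x; cases y) (auto simp: path_step_def)
      then show ?thesis by (auto simp: UL_def LR_def)
    qed
  qed
next
  case ("2_1") then show ?case by (simp add: UL_def)
next
  case ("2_2" x)
  then show ?case by (cases v; cases w; cases x) (auto simp: UL_def LR_def path_step_def)
qed

lemma cross: "steps P \<Longrightarrow> P \<noteq> [] \<Longrightarrow> UL Q (hd P) \<Longrightarrow> LR Q (last P) \<Longrightarrow>
   \<forall>p\<in>set P. fst p \<le> rh \<and> snd p \<le> sh \<Longrightarrow> steps Q \<Longrightarrow> Q \<noteq> [] \<Longrightarrow>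
   fst (last Q) = rh \<or> snd (last Q) = sh \<Longrightarrow> \<exists>v\<in>set P. v \<in> set Q"
proof (induction P rule: steps.induct)
  case (1 a b xs)
  show ?case
  proof (cases "LR Q a")
    case True
    then show ?thesis using meet[of Q a a] 1 by auto
  next
    case False
    show ?thesis
    proof (cases "LR Q b")
      case True
      then show ?thesis using meet[of Q a b] 1 by auto
    next
      case False
      have "UL Q b" using dich[of Q rh sh a b] 1 False by auto
      then have "\<exists>v\<in>set (b#xs). v \<in> set Q" using 1 by auto
      then show ?thesis by auto
    qed
  qed
next
  case ("2_1") then show ?case by simp
next
  case ("2_2" x)
  then show ?case using meet[of Q x x] by auto
qed

lemma in_nth: "sl \<le> sh \<Longrightarrow> k < length (in_boundary rl rh sl sh) \<Longrightarrow>
  in_boundary rl rh sl sh ! k = (if k \<le> sh - sl then (rl, sh - k) else (rl + (k - (sh - sl)), sl))"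
  by (auto simp del: upt_Suc simp: in_boundary_def nth_append rev_nth)

lemma out_nth: "rl \<le> rh \<Longrightarrow> k < length (out_boundary rl rh sl sh) \<Longrightarrow>
  out_boundary rl rh sl sh ! k = (if k \<le> rh - rl then (rl + k, sh) else (rh, sh - (k - (rh - rl))))"
  by (auto simp del: upt_Suc simp: out_boundary_def nth_append rev_nth)

lemma G1: "sl \<le> sh \<Longrightarrow> pi < pj \<Longrightarrow> pj < length (in_boundary rl rh sl sh) \<Longrightarrow>
  fst (in_boundary rl rh sl sh ! pi) \<le> fst (in_boundary rl rh sl sh ! pj) \<and>
  snd (in_boundary rl rh sl sh ! pj) \<le> snd (in_boundary rl rh sl sh ! pi)"
  using in_nth[of sl sh pi rl rh] in_nth[of sl sh pj rl rh] by auto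

lemma G2: "rl \<le> rh \<Longrightarrow> qa < qb \<Longrightarrow> qb < length (out_boundary rl rh sl sh) \<Longrightarrow>
  fst (out_boundary rl rh sl sh ! qa) \<le> fst (out_boundary rl rh sl sh ! qb) \<and>
  snd (out_boundary rl rh sl sh ! qb) \<le> snd (out_boundary rl rh sl sh ! qa)"
  using out_nth[of rl rh qa sl sh] out_nth[of rl rh qb sl sh] by auto

lemma G3: "rl \<le> rh \<Longrightarrow> k < length (out_boundary rl rh sl sh) \<Longrightarrow>
  fst (out_boundary rl rh sl sh ! k) \<le> rh \<and> snd (out_boundary rl rh sl sh ! k) \<le> sh \<and>
  (fst (out_boundary rl rh sl sh ! k) = rh \<or> snd (out_boundary rl rh sl sh ! k) = sh)"
  using out_nth[of rl rh k sl sh] by auto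

definition E where "E m n M a b \<longleftrightarrow> path_step a b \<and> one_entry m n M a \<and> one_entry m n M b"

lemma is_path_steps: "is_path m n M p \<longleftrightarrow> p \<noteq> [] \<and> (\<forall>e\<in>set p. one_entry m n M e) \<and> steps p"
  by (simp add: is_path_def steps_nth)

lemma path_star: "steps p \<Longrightarrow> \<forall>e\<in>set p. one_entry m n M e \<Longrightarrow> v \<in> set p \<Longrightarrow>
   (E m n M)\<^sup>*\<^sup>* (hd p) v \<and> (E m n M)\<^sup>*\<^sup>* v (last p)"
proof (induction p arbitrary: v rule: steps.induct)
  case (1 a b xs)
  have e: "E m n M a b" using 1 by (simp add: E_def)
  have ih: "\<And>v'. v' \<in> set (b#xs) \<Longrightarrow> (E m n M)\<^sup>*\<^sup>* b v' \<and> (E m n M)\<^sup>*\<^sup>* v' (last (b#xs))"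
    using 1 by auto
  show ?case
  proof (cases "v = a")
    case True
    then show ?thesis using e ih[of b]
      by (auto intro: converse_rtranclp_into_rtranclp)
  next
    case False
    then have "v \<in> set (b#xs)" using 1 by simp
    then have "(E m n M)\<^sup>*\<^sup>* b v \<and> (E m n M)\<^sup>*\<^sup>* v (last (b#xs))" using ih by blast
    then show ?thesis using e by (simp add: converse_rtranclp_into_rtranclp)
  qed
qed auto

lemma star_reach: "(E m n M)\<^sup>*\<^sup>* a b \<Longrightarrow> one_entry m n M a \<Longrightarrow> reachable m n M a b"
proof (induction rule: converse_rtranclp_induct)
  case base
  then show ?case unfolding reachable_def is_path_steps by (intro exI[of _ "[b]"]) auto
next
  case (step y z)
  then obtain p where p: "is_path m n M p" "hd p = z" "last p = b"
    using E_def reachable_def by metis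
  have "is_path m n M (y#p)" using p step(1) unfolding is_path_steps E_def
    by (cases p) auto
  moreover have "p \<noteq> []" using p(1) unfolding is_path_def by simp
  ultimately show ?case using p unfolding reachable_def by (intro exI[of _ "y#p"]) auto
qed

lemma reach_star: "reachable m n M a b \<Longrightarrow> one_entry m n M a \<and> (E m n M)\<^sup>*\<^sup>* a b"
proof -
  assume "reachable m n M a b"
  then obtain p where p: "is_path m n M p" "hd p = a" "last p = b" unfolding reachable_def by blast
  then have "steps p" "p \<noteq> []" "\<forall>e\<in>set p. one_entry m n M e" unfolding is_path_steps by auto
  then show ?thesis using path_star[of p m n M a] p by auto
qed

lemma cross_reach:
  assumes "rl \<le> rh" "sl \<le> sh" "pi < pj" "pj < length (in_boundary rl rh sl sh)"
    "qa < qb" "qb < length (out_boundary rl rh sl sh)"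
    "reachable m n M (in_boundary rl rh sl sh ! pj) (out_boundary rl rh sl sh ! qa)"
    "reachable m n M (in_boundary rl rh sl sh ! pi) (out_boundary rl rh sl sh ! qb)"
  shows "\<exists>v. (E m n M)\<^sup>*\<^sup>* (in_boundary rl rh sl sh ! pi) v \<and> (E m n M)\<^sup>*\<^sup>* (in_boundary rl rh sl sh ! pj) v
     \<and> (E m n M)\<^sup>*\<^sup>* v (out_boundary rl rh sl sh ! qa) \<and> (E m n M)\<^sup>*\<^sup>* v (out_boundary rl rh sl sh ! qb)"
proof -
  let ?I = "in_boundary rl rh sl sh" and ?O = "out_boundary rl rh sl sh"
  obtain P where P: "is_path m n M P" "hd P = ?I ! pj" "last P = ?O ! qa" using assms(7) unfolding reachable_def by blast
  obtain Q where Q: "is_path m n M Q" "hd Q = ?I ! pi" "last Q = ?O ! qb" using assms(8) unfolding reachable_def by blast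
  have Ps: "steps P" "P \<noteq> []" "\<forall>e\<in>set P. one_entry m n M e" using P unfolding is_path_steps by auto
  have Qs: "steps Q" "Q \<noteq> []" "\<forall>e\<in>set Q. one_entry m n M e" using Q unfolding is_path_steps by auto
  have g1: "fst (?I ! pi) \<le> fst (?I ! pj) \<and> snd (?I ! pj) \<le> snd (?I ! pi)" using G1 assms by blast
  have g2: "fst (?O ! qa) \<le> fst (?O ! qb) \<and> snd (?O ! qb) \<le> snd (?O ! qa)" using G2 assms by blast
  have g3a: "fst (?O ! qa) \<le> rh \<and> snd (?O ! qa) \<le> sh" using G3[of rl rh qa sl sh] assms by auto
  have g3b: "fst (?O ! qb) = rh \<or> snd (?O ! qb) = sh" using G3[of rl rh qb sl sh] assms by auto
  have "UL Q (hd P)" unfolding UL_def using g1 P Q Qs(2) hd_in_set by metis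
  moreover have "LR Q (last P)" unfolding LR_def using g2 P Q Qs(2) last_in_set by metis
  moreover have "\<forall>p\<in>set P. fst p \<le> rh \<and> snd p \<le> sh"
    using steps_le_last[OF Ps(1)] P(3) g3a by fastforce
  moreover have "fst (last Q) = rh \<or> snd (last Q) = sh" using g3b Q(3) by simp
  ultimately have "\<exists>v\<in>set P. v \<in> set Q"
    using cross[OF Ps(1) Ps(2) _ _ _ Qs(1) Qs(2), of rh sh] by blast
  then obtain v where v: "v \<in> set P" "v \<in> set Q" by blast
  have a: "(E m n M)\<^sup>*\<^sup>* (hd P) v \<and> (E m n M)\<^sup>*\<^sup>* v (last P)" using path_star[OF Ps(1) Ps(3) v(1)] .
  have b: "(E m n M)\<^sup>*\<^sup>* (hd Q) v \<and> (E m n M)\<^sup>*\<^sup>* v (last Q)" using path_star[OF Qs(1) Qs(3) v(2)] .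
  show ?thesis apply (rule exI[of _ v]) using a b unfolding P(2,3) Q(2,3) by simp
qed

theorem corollary2:
  fixes m n :: nat and M :: "nat \<Rightarrow> nat \<Rightarrow> nat"
    and rl rh sl sh :: nat and pi pj :: nat
  assumes "zero_one_matrix m n M"
    and "rl \<le> rh" and "rh < m" and "sl \<le> sh" and "sh < n"
    and "pi < pj" and "pj < length (in_boundary rl rh sl sh)"
    and "\<exists>q < length (out_boundary rl rh sl sh).
           reachable m n M (in_boundary rl rh sl sh ! pi) (out_boundary rl rh sl sh ! q)"
    and "\<exists>q < length (out_boundary rl rh sl sh).
           reachable m n M (in_boundary rl rh sl sh ! pj) (out_boundary rl rh sl sh ! q)"
  shows "sigmaA m n M rl rh sl sh (in_boundary rl rh sl sh ! pj)
           \<ge> sigmaA m n M rl rh sl sh (in_boundary rl rh sl sh ! pi)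
         \<and> sigmaZ m n M rl rh sl sh (in_boundary rl rh sl sh ! pj)
           \<ge> sigmaZ m n M rl rh sl sh (in_boundary rl rh sl sh ! pi)"
proof -
  let ?I = "in_boundary rl rh sl sh" and ?O = "out_boundary rl rh sl sh"
  define Si where "Si = (\<lambda>q. q < length ?O \<and> reachable m n M (?I ! pi) (?O ! q))"
  define Sj where "Sj = (\<lambda>q. q < length ?O \<and> reachable m n M (?I ! pj) (?O ! q))"
  have exi: "\<exists>q. Si q" and exj: "\<exists>q. Sj q" using assms(8,9) unfolding Si_def Sj_def by auto
  have oi: "one_entry m n M (?I ! pi)" using exi reach_star unfolding Si_def by blast
  have oj: "one_entry m n M (?I ! pj)" using exj reach_star unfolding Sj_def by blast
  have A: "sigmaA m n M rl rh sl sh (?I ! pi) \<le> sigmaA m n M rl rh sl sh (?I ! pj)"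
  proof (rule ccontr)
    assume c: "\<not> ?thesis"
    let ?a = "sigmaA m n M rl rh sl sh (?I ! pj)" and ?b = "sigmaA m n M rl rh sl sh (?I ! pi)"
    have a: "Sj ?a" unfolding sigmaA_def Sj_def[symmetric] using exj by (metis LeastI_ex)
    have b: "Si ?b" unfolding sigmaA_def Si_def[symmetric] using exi by (metis LeastI_ex)
    have ab: "?a < ?b" using c by simp
    obtain v where v: "(E m n M)\<^sup>*\<^sup>* (?I ! pi) v" "(E m n M)\<^sup>*\<^sup>* v (?O ! ?a)"
      using cross_reach[OF assms(2,4,6,7) ab] a b unfolding Si_def Sj_def by blast
    have "reachable m n M (?I ! pi) (?O ! ?a)"
      using star_reach[OF rtranclp_trans[OF v] oi] .
    then have "Si ?a" using a ab unfolding Si_def Sj_def by simp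
    then have "?b \<le> ?a" unfolding sigmaA_def Si_def[symmetric] by (rule Least_le)
    then show False using ab by simp
  qed
  have bd: "\<And>y. Si y \<Longrightarrow> y \<le> length ?O" "\<And>y. Sj y \<Longrightarrow> y \<le> length ?O"
    unfolding Si_def Sj_def by auto
  have Z: "sigmaZ m n M rl rh sl sh (?I ! pi) \<le> sigmaZ m n M rl rh sl sh (?I ! pj)"
  proof (rule ccontr)
    assume c: "\<not> ?thesis"
    let ?a = "sigmaZ m n M rl rh sl sh (?I ! pj)" and ?b = "sigmaZ m n M rl rh sl sh (?I ! pi)"
    obtain kj where kj: "Sj kj" using exj by blast
    obtain ki where ki: "Si ki" using exi by blast
    have a: "Sj ?a" unfolding sigmaZ_def Sj_def[symmetric] using GreatestI_nat[where P=Sj, OF kj bd(2)] .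
    have b: "Si ?b" unfolding sigmaZ_def Si_def[symmetric] using GreatestI_nat[where P=Si, OF ki bd(1)] .
    have ab: "?a < ?b" using c by simp
    obtain v where v: "(E m n M)\<^sup>*\<^sup>* (?I ! pj) v" "(E m n M)\<^sup>*\<^sup>* v (?O ! ?b)"
      using cross_reach[OF assms(2,4,6,7) ab] a b unfolding Si_def Sj_def by blast
    have "reachable m n M (?I ! pj) (?O ! ?b)"
      using star_reach[OF rtranclp_trans[OF v] oj] .
    then have "Sj ?b" using b unfolding Si_def Sj_def by simp
    then have "?b \<le> ?a" unfolding sigmaZ_def Sj_def[symmetric] by (rule Greatest_le_nat[where P=Sj, OF _ bd(2)])
    then show False using ab by simp
  qed
  show ?thesis using A Z by simp
qed

end
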